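(* Let $\mathbf{A}\in\mathbb{R}^{n\times d}$ with $\mathrm{diag}(\mathbf{A}^T\mathbf{A})=\mathbf{1}$, let $\hat{\mathbf{A}}=[\mathbf{A},-\mathbf{A}]\in\mathbb{R}^{n\times 2d}$ with rows $\hat{\mathbf{a}}_i$, let $y_1,\dots,y_n$ be observations, $\lambda\ge0$, $L$ a non-negative convex loss, and $$F(\mathbf{x})=\sum_{i=1}^n L(\hat{\mathbf{a}}_i^T\mathbf{x},y_i)+\lambda\sum_{j=1}^{2d}x_j,\qquad\mathbf{x}\in\mathbb{R}^{2d}_+.$$ Assume $F$ is convex and there is $\beta>0$ such that for all $\mathbf{x}$ and parallel updates $\Delta\mathbf{x}$ (with $\mathbf{x},\mathbf{x}+\Delta\mathbf{x}\in\mathbb{R}^{2d}_+$), $F(\mathbf{x}+\Delta\mathbf{x})\le F(\mathbf{x})+\Delta\mathbf{x}^T\nabla F(\mathbf{x})+\tfrac{\beta}{2}\Delta\mathbf{x}^T\hat{\mathbf{A}}^T\hat{\mathbf{A}}\Delta\mathbf{x}$. Let $\rho$ be the spectral radius of $\hat{\mathbf{A}}^T\hat{\mathbf{A}}$ and let $P$ be a positive integer with $P<\tfrac{2d}{\rho}+1$. Fix $\mathbf{x}\in\mathbb{R}^{2d}_+$, and for each $j\in\{1,\dots,2d\}$ let $\delta x_j=\max\{-x_j,-(\nabla F(\mathbf{x}))_j/\beta\}$. Let $\mathcal{P}_t$ be a multiset of $P$ indices drawn independently and uniformly from $\{1,\dots,2d\}$, let $\Delta\mathbf{x}$ be the collective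 update $(\Delta\mathbf{x})_k=\sum_{i_j\in\mathcal{P}_t:\,i_j=k}\delta x_{i_j}$, and assume $\mathbf{x}+\Delta\mathbf{x}\in\mathbb{R}^{2d}_+$. Then $$\mathbb{E}_{\mathcal{P}_t}\big[F(\mathbf{x}+\Delta\mathbf{x})-F(\mathbf{x})\big]\le P\,\mathbb{E}_j\Big[\delta x_j(\nabla F(\mathbf{x}))_j+\tfrac{\beta}{2}\Big(1+\tfrac{(P-1)\rho}{2d}\Big)(\delta x_j)^2\Big],$$ where $\mathbb{E}_{\mathcal{P}_t}$ is over the random choice of $\mathcal{P}_t$ and $\mathbb{E}_j$ is over $j$ chosen uniformly at random from $\{1,\dots,2d\}$.
   Context: This is one iteration of Shotgun (parallel stochastic coordinate descent) from the point $\mathbf{x}$: $P$ indices are drawn independently and uniformly, each chosen coordinate receives the Shooting update $\delta x_j$ computed at the same point $\mathbf{x}$, and all are applied simultaneously. Spectral radius means the maximum absolute eigenvalue. (The paper's "$\mathbf{A}^T\mathbf{A}$" here acts on the $2d$ duplicated coordinates, i.e. is $\hat{\mathbf{A}}^T\hat{\mathbf{A}}$.) *)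

theory Defs
  imports "HOL-Analysis.Analysis"
begin

text \<open>Coordinates of the duplicated problem are indexed by the sum type 'd + 'd:
  Inl j is the positive copy of feature j, Inr j the negative copy.\<close>

definition Ahat :: "real^'d^'n \<Rightarrow> real^('d + 'd)^'n" where
  "Ahat A = (\<chi> i k. case k of Inl j \<Rightarrow> A $ i $ j | Inr j \<Rightarrow> - (A $ i $ j))"

definition nonneg_orthant :: "(real^'k) set" where
  "nonneg_orthant = {z. \<forall>j. 0 \<le> z $ j}"

definition shotgun_F ::
  "real^'d^'n \<Rightarrow> ('n \<Rightarrow> real) \<Rightarrow> real \<Rightarrow> (real \<Rightarrow> real \<Rightarrow> real) \<Rightarrow> real^('d + 'd) \<Rightarrow> real" where
  "shotgun_F A y lam L z = (\<Sum>i\<in>UNIV. L (row i (Ahat A) \<bullet> z) (y i)) + lam * (\<Sum>j\<in>UNIV. z $ j)"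

definition cmat :: "real^'n^'m \<Rightarrow> complex^'n^'m" where
  "cmat M = (\<chi> i j. complex_of_real (M $ i $ j))"

definition mat_eigenvalues :: "real^'n^'n \<Rightarrow> complex set" where
  "mat_eigenvalues M = {\<mu>. \<exists>v. v \<noteq> 0 \<and> cmat M *v v = \<mu> *s v}"

definition mat_spectral_radius :: "real^'n^'n \<Rightarrow> real" where
  "mat_spectral_radius M = Max (cmod ` mat_eigenvalues M)"

definition shoot_delta :: "real \<Rightarrow> real^'k \<Rightarrow> real^'k \<Rightarrow> 'k \<Rightarrow> real" where
  "shoot_delta \<beta> g z j = max (- (z $ j)) (- (g $ j) / \<beta>)"

text \<open>Collective update for the draws I s, s < P (a multiset of P indices).\<close>

definition collective_update :: "nat \<Rightarrow> ('k \<Rightarrow> real) \<Rightarrow> (nat \<Rightarrow> 'k) \<Rightarrow> real^'k" where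
  "collective_update P \<delta> I = (\<chi> k. \<Sum>s\<in>{..<P}. if I s = k then \<delta> (I s) else 0)"

end

theory Submission
  imports Defs
begin


lemma eig_indep:
  fixes C :: "complex^'n^'n" and e :: "complex \<Rightarrow> complex^'n"
  assumes "finite S" "\<forall>\<mu>\<in>S. e \<mu> \<noteq> 0 \<and> C *v e \<mu> = \<mu> *s e \<mu>"
  shows "vec.independent (e ` S) \<and> inj_on e S"
  using assms
proof (induction S rule: finite_induct)
  case empty
  then show ?case by (simp add: vec.independent_empty)
next
  case (insert \<mu> S)
  then have IH: "vec.independent (e ` S)" "inj_on e S" and fin: "finite S" by auto
  have e\<mu>: "e \<mu> \<noteq> 0" "C *v e \<mu> = \<mu> *s e \<mu>" using insert.prems by auto
  have eS: "\<And>\<nu>. \<nu> \<in> S \<Longrightarrow> e \<nu> \<noteq> 0 \<and> C *v e \<nu> = \<nu> *s e \<nu>" using insert.prems by auto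
  have notin: "e \<mu> \<notin> e ` S"
  proof
    assume "e \<mu> \<in> e ` S"
    then obtain \<nu> where \<nu>: "\<nu> \<in> S" "e \<mu> = e \<nu>" by auto
    then have "\<mu> \<noteq> \<nu>" using insert.hyps by auto
    have "\<mu> *s e \<mu> = \<nu> *s e \<mu>" using eS[OF \<nu>(1)] e\<mu> \<nu>(2) by simp
    then have "(\<mu> - \<nu>) *s e \<mu> = 0" by (simp add: vec.scale_left_diff_distrib)
    then show False using \<open>\<mu> \<noteq> \<nu>\<close> e\<mu>(1) by (simp add: vec.scale_eq_0_iff)
  qed
  have nspan: "e \<mu> \<notin> vec.span (e ` S)"
  proof
    assume "e \<mu> \<in> vec.span (e ` S)"
    then obtain u where u: "e \<mu> = (\<Sum>w\<in>e ` S. u w *s w)"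
      using vec.span_finite[of "e ` S"] fin by auto
    also have "\<dots> = (\<Sum>\<nu>\<in>S. u (e \<nu>) *s e \<nu>)"
      using sum.reindex[OF IH(2), of "\<lambda>w. u w *s w"] by simp
    finally have u2: "e \<mu> = (\<Sum>\<nu>\<in>S. u (e \<nu>) *s e \<nu>)" .
    have "C *v e \<mu> - \<mu> *s e \<mu> = (\<Sum>\<nu>\<in>S. (u (e \<nu>) * (\<nu> - \<mu>)) *s e \<nu>)"
    proof -
      have "C *v e \<mu> - \<mu> *s e \<mu> = (\<Sum>\<nu>\<in>S. u (e \<nu>) *s (C *v e \<nu>)) - (\<Sum>\<nu>\<in>S. (\<mu> * u (e \<nu>)) *s e \<nu>)"
        by (subst (1 2) u2) (simp add: vec.sum vec.scale vec.scale_sum_right vector_smult_assoc)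
      also have "\<dots> = (\<Sum>\<nu>\<in>S. u (e \<nu>) *s (C *v e \<nu>) - (\<mu> * u (e \<nu>)) *s e \<nu>)"
        by (simp add: sum_subtractf)
      also have "\<dots> = (\<Sum>\<nu>\<in>S. (u (e \<nu>) * (\<nu> - \<mu>)) *s e \<nu>)"
        by (rule sum.cong) (auto simp: eS vector_smult_assoc algebra_simps vec.scale_left_diff_distrib)
      finally show ?thesis .
    qed
    then have z: "(\<Sum>\<nu>\<in>S. (u (e \<nu>) * (\<nu> - \<mu>)) *s e \<nu>) = 0" using e\<mu>(2) by simp
    define c where "c w = u w * (inv_into S e w - \<mu>)" for w
    have "(\<Sum>w\<in>e ` S. c w *s w) = (\<Sum>\<nu>\<in>S. c (e \<nu>) *s e \<nu>)"
      using sum.reindex[OF IH(2), of "\<lambda>w. c w *s w"] by simp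
    also have "\<dots> = (\<Sum>\<nu>\<in>S. (u (e \<nu>) * (\<nu> - \<mu>)) *s e \<nu>)"
      by (rule sum.cong) (auto simp: c_def inv_into_f_f[OF IH(2)])
    finally have "(\<Sum>w\<in>e ` S. c w *s w) = 0" using z by simp
    then have c0: "\<forall>w\<in>e ` S. c w = 0" using IH(1) vec.independent_explicit by blast
    have "\<And>\<nu>. \<nu> \<in> S \<Longrightarrow> u (e \<nu>) = 0"
    proof -
      fix \<nu> assume "\<nu> \<in> S"
      then have "c (e \<nu>) = 0" using c0 by auto
      then have "u (e \<nu>) * (\<nu> - \<mu>) = 0" by (simp add: c_def inv_into_f_f[OF IH(2) \<open>\<nu> \<in> S\<close>])
      moreover have "\<nu> \<noteq> \<mu>" using \<open>\<nu> \<in> S\<close> insert.hyps by auto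
      ultimately show "u (e \<nu>) = 0" by simp
    qed
    then have "e \<mu> = 0" using u2 by simp
    then show False using e\<mu>(1) by simp
  qed
  show ?case using IH notin nspan insert.hyps by (auto simp: vec.independent_insert)
qed

lemma eigenvalues_finite: "finite (mat_eigenvalues (M :: real^'n^'n))"
proof -
  have "finite (mat_eigenvalues M) \<and> card (mat_eigenvalues M) \<le> CARD('n)"
  proof (rule finite_if_finite_subsets_card_bdd)
  fix S assume S: "S \<subseteq> mat_eigenvalues M" "finite S"
  define e where "e \<mu> = (SOME v. v \<noteq> 0 \<and> cmat M *v v = \<mu> *s v)" for \<mu>
  have "\<forall>\<mu>\<in>S. e \<mu> \<noteq> 0 \<and> cmat M *v e \<mu> = \<mu> *s e \<mu>"
  proof
    fix \<mu> assume "\<mu> \<in> S"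
    then have "\<exists>v. v \<noteq> 0 \<and> cmat M *v v = \<mu> *s v" using S unfolding mat_eigenvalues_def by auto
    then show "e \<mu> \<noteq> 0 \<and> cmat M *v e \<mu> = \<mu> *s e \<mu>" unfolding e_def by (rule someI_ex)
  qed
  from eig_indep[OF S(2) this] have "vec.independent (e ` S)" "inj_on e S" by auto
  then have "card S = vec.dim (e ` S)" by (simp add: vec.dim_eq_card_independent card_image)
  also have "\<dots> \<le> CARD('n)" by (rule dim_subset_UNIV_cart_gen)
  finally show "card S \<le> CARD('n)" .
  qed
  then show ?thesis by simp
qed



lemma quad_scale: "(c *\<^sub>R x) \<bullet> ((M::real^'k^'k) *v (c *\<^sub>R x)) = c^2 * (x \<bullet> (M *v x))"
  by (simp add: matrix_vector_mult_scaleR power2_eq_square)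

lemma rayleigh:
  fixes M :: "real^'k^'k"
  assumes symM: "transpose M = M"
  shows "x \<bullet> (M *v x) \<le> mat_spectral_radius M * (x \<bullet> x)"
proof -
  have sym: "a \<bullet> (M *v b) = b \<bullet> (M *v a)" for a b
    by (metis dot_lmul_matrix inner_commute symM vector_transpose_matrix)
  define q where "q z = z \<bullet> (M *v z)" for z :: "real^'k"
  have cont: "continuous_on (sphere 0 1) q"
    unfolding q_def by (intro continuous_intros linear_continuous_on matrix_vector_mul_linear bounded_linear_intros)
  have ne: "sphere (0::real^'k) 1 \<noteq> {}" by simp
  obtain v where v: "v \<in> sphere 0 1" "\<forall>y\<in>sphere 0 1. q y \<le> q v"
    using continuous_attains_sup[OF compact_sphere ne cont] by blast
  define \<mu> where "\<mu> = q v"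
  have nv: "norm v = 1" using v(1) by simp
  have vv: "v \<bullet> v = 1" using nv by (simp add: power2_norm_eq_inner[symmetric])
  have allq: "q z \<le> \<mu> * (z \<bullet> z)" for z
  proof (cases "z = 0")
    case True then show ?thesis by (simp add: q_def)
  next
    case False
    define y where "y = (1 / norm z) *\<^sub>R z"
    have "y \<in> sphere 0 1" using False by (simp add: y_def)
    then have "q y \<le> \<mu>" using v(2) \<mu>_def by auto
    moreover have "q y = q z / (norm z)^2" unfolding y_def q_def quad_scale by (simp add: power_divide)
    moreover have "z \<bullet> z = (norm z)^2" by (simp add: power2_norm_eq_inner)
    moreover have "norm z > 0" using False by simp
    ultimately show ?thesis by (simp add: divide_le_eq)
  qed
  define w where "w = M *v v - \<mu> *\<^sub>R v"
  define W where "W = w \<bullet> w"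
  define b where "b = q w - \<mu> * W"
  have key: "2 * W * t + b * t^2 \<le> 0" for t
  proof -
    have e1: "q (v + t *\<^sub>R w) \<le> \<mu> * ((v + t *\<^sub>R w) \<bullet> (v + t *\<^sub>R w))" by (rule allq)
    have e2: "q (v + t *\<^sub>R w) = q v + 2 * t * (w \<bullet> (M *v v)) + t^2 * q w"
      unfolding q_def by (simp add: matrix_vector_right_distrib matrix_vector_mult_scaleR
          inner_add_left inner_add_right sym[of v w] power2_eq_square algebra_simps)
    have e3: "(v + t *\<^sub>R w) \<bullet> (v + t *\<^sub>R w) = 1 + 2 * t * (w \<bullet> v) + t^2 * W"
      by (simp add: inner_add_left inner_add_right vv W_def inner_commute power2_eq_square algebra_simps)
    have e4: "w \<bullet> (M *v v) - \<mu> * (w \<bullet> v) = W"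
      by (simp add: W_def w_def inner_diff_right)
    have "2 * W * t + b * t^2 = (q v + 2 * t * (w \<bullet> (M *v v)) + t^2 * q w) - \<mu> * (1 + 2 * t * (w \<bullet> v) + t^2 * W)"
      unfolding b_def \<mu>_def e4[symmetric] by (simp add: algebra_simps)
    then show ?thesis using e1 e2 e3 by simp
  qed
  have W0: "W \<ge> 0" unfolding W_def by simp
  have "W = 0"
  proof -
    define c where "c = \<bar>b\<bar> + 1"
    have pos: "c > 0" by (simp add: c_def)
    define t where "t = W / c"
    have "2 * W * t + b * t^2 \<le> 0" by (rule key)
    then have "(2 * W * t + b * t^2) * c^2 \<le> 0"
      by (simp add: mult_nonpos_nonneg)
    also have "(2 * W * t + b * t^2) * c^2 = W^2 * (2 * c + b)"
      unfolding t_def using pos by (simp add: field_simps power2_eq_square)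
    finally have "W^2 * (2 * (\<bar>b\<bar> + 1) + b) \<le> 0" by (simp add: c_def)
    moreover have "2 * (\<bar>b\<bar> + 1) + b > 0" by (cases "b \<ge> 0") auto
    ultimately have "W^2 \<le> 0" by (simp add: mult_le_0_iff)
    then show ?thesis by simp
  qed
  then have eig: "M *v v = \<mu> *\<^sub>R v" unfolding W_def w_def by simp
  define cv where "cv = (\<chi> i. complex_of_real (v $ i))"
  have "cv \<noteq> 0"
  proof
    assume "cv = 0"
    then have "v = 0" by (simp add: cv_def vec_eq_iff)
    then show False using nv by simp
  qed
  moreover have "cmat M *v cv = complex_of_real \<mu> *s cv"
  proof -
    have "(cmat M *v cv) $ i = complex_of_real ((M *v v) $ i)" for i
      by (simp add: cmat_def cv_def matrix_vector_mult_def)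
    then show ?thesis using eig by (simp add: vec_eq_iff cv_def)
  qed
  ultimately have "complex_of_real \<mu> \<in> mat_eigenvalues M" unfolding mat_eigenvalues_def by blast
  then have "cmod (complex_of_real \<mu>) \<le> mat_spectral_radius M"
    unfolding mat_spectral_radius_def by (meson Max_ge eigenvalues_finite finite_imageI imageI)
  then have "\<bar>\<mu>\<bar> \<le> mat_spectral_radius M" by simp
  moreover have "x \<bullet> (M *v x) \<le> \<mu> * (x \<bullet> x)" using allq[of x] by (simp add: q_def)
  moreover have "\<mu> * (x \<bullet> x) \<le> \<bar>\<mu>\<bar> * (x \<bullet> x)" by (intro mult_right_mono) auto
  moreover have "\<bar>\<mu>\<bar> * (x \<bullet> x) \<le> mat_spectral_radius M * (x \<bullet> x)" using calculation(1) by (intro mult_right_mono) auto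
  ultimately show ?thesis by linarith
qed



lemma prod_two:
  assumes "finite K" "s \<in> K" "t \<in> K" "s \<noteq> t"
  shows "prod g K = g s * g t * prod g (K - {s, t})"
proof -
  have "prod g K = g s * prod g (K - {s})" using assms by (simp add: prod.remove)
  also have "prod g (K - {s}) = g t * prod g (K - {s} - {t})" using assms by (simp add: prod.remove)
  finally show ?thesis by (simp add: insert_commute set_diff_eq mult.assoc)
qed

lemma count1:
  fixes j :: "'k::finite"
  assumes "s < P"
  shows "(\<Sum>I\<in>Pi\<^sub>E {..<P} (\<lambda>_. UNIV). if I s = j then 1 else 0 :: real) = real CARD('k) ^ (P - 1)"
proof -
  define f where "f s' b = (if s' = s then (if b = j then 1 else 0) else (1::real))" for s' and b :: 'k
  have "(\<Sum>I\<in>Pi\<^sub>E {..<P} (\<lambda>_. UNIV). \<Prod>s'\<in>{..<P}. f s' (I s')) = (\<Prod>s'\<in>{..<P}. \<Sum>b\<in>UNIV. f s' b)"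
    by (rule prod_sum_PiE[symmetric]) auto
  moreover have "(\<Prod>s'\<in>{..<P}. f s' (I s')) = (if I s = j then 1 else 0)" for I
    using assms by (simp add: prod.remove[of "{..<P}" s] f_def)
  moreover have "(\<Prod>s'\<in>{..<P}. \<Sum>b\<in>UNIV. f s' b) = real CARD('k) ^ (P - 1)"
    using assms by (simp add: prod.remove[of "{..<P}" s] f_def)
  ultimately show ?thesis by simp
qed

lemma count2:
  fixes j k :: "'k::finite"
  assumes "s < P" "t < P" "s \<noteq> t"
  shows "(\<Sum>I\<in>Pi\<^sub>E {..<P} (\<lambda>_. UNIV). if I s = j \<and> I t = k then 1 else 0 :: real) = real CARD('k) ^ (P - 2)"
proof -
  define f where "f s' b = (if s' = s then (if b = j then 1 else 0) else if s' = t then (if b = k then 1 else 0) else (1::real))" for s' and b :: 'k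
  have "(\<Sum>I\<in>Pi\<^sub>E {..<P} (\<lambda>_. UNIV). \<Prod>s'\<in>{..<P}. f s' (I s')) = (\<Prod>s'\<in>{..<P}. \<Sum>b\<in>UNIV. f s' b)"
    by (rule prod_sum_PiE[symmetric]) auto
  moreover have "(\<Prod>s'\<in>{..<P}. f s' (I s')) = (if I s = j \<and> I t = k then 1 else 0)" for I
  proof -
    have "(\<Prod>s'\<in>{..<P}. f s' (I s')) = f s (I s) * f t (I t) * (\<Prod>s'\<in>{..<P} - {s,t}. f s' (I s'))"
      using assms by (intro prod_two) auto
    also have "(\<Prod>s'\<in>{..<P} - {s,t}. f s' (I s')) = 1" by (intro prod.neutral) (auto simp: f_def)
    finally show ?thesis using assms by (simp add: f_def)
  qed
  moreover have "(\<Prod>s'\<in>{..<P}. \<Sum>b\<in>UNIV. f s' b) = real CARD('k) ^ (P - 2)"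
  proof -
    have "(\<Prod>s'\<in>{..<P}. \<Sum>b\<in>UNIV. f s' b) = (\<Sum>b\<in>UNIV. f s b) * (\<Sum>b\<in>UNIV. f t b) * (\<Prod>s'\<in>{..<P} - {s,t}. \<Sum>b\<in>UNIV. f s' b)"
      using assms by (intro prod_two) auto
    also have "(\<Prod>s'\<in>{..<P} - {s,t}. \<Sum>b\<in>UNIV. f s' b) = (\<Prod>s'\<in>{..<P} - {s,t}. real CARD('k))"
      by (intro prod.cong) (auto simp: f_def)
    also have "\<dots> = real CARD('k) ^ (P - 2)"
      using assms by (simp add: card_Diff_subset numeral_2_eq_2)
    finally show ?thesis using assms by (simp add: f_def)
  qed
  ultimately show ?thesis by simp
qed

lemma sum1:
  fixes h :: "'k::finite \<Rightarrow> real"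
  assumes "s < P"
  shows "(\<Sum>I\<in>Pi\<^sub>E {..<P} (\<lambda>_. UNIV). h (I s)) = real CARD('k) ^ (P - 1) * (\<Sum>j\<in>UNIV. h j)"
proof -
  have "(\<Sum>I\<in>Pi\<^sub>E {..<P} (\<lambda>_. UNIV). h (I s)) = (\<Sum>I\<in>Pi\<^sub>E {..<P} (\<lambda>_. UNIV). \<Sum>j\<in>UNIV. h j * (if I s = j then 1 else 0))"
    by (intro sum.cong) (auto simp: if_distrib cong: if_cong)
  also have "\<dots> = (\<Sum>j\<in>UNIV. h j * (\<Sum>I\<in>Pi\<^sub>E {..<P} (\<lambda>_. UNIV). if I s = j then 1 else 0))"
    by (subst sum.swap) (simp add: sum_distrib_left)
  also have "\<dots> = real CARD('k) ^ (P - 1) * (\<Sum>j\<in>UNIV. h j)"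
    unfolding count1[OF assms] by (simp add: sum_distrib_right mult.commute)
  finally show ?thesis .
qed

lemma sum2:
  fixes h :: "'k::finite \<Rightarrow> 'k \<Rightarrow> real"
  assumes "s < P" "t < P" "s \<noteq> t"
  shows "(\<Sum>I\<in>Pi\<^sub>E {..<P} (\<lambda>_. UNIV). h (I s) (I t)) = real CARD('k) ^ (P - 2) * (\<Sum>j\<in>UNIV. \<Sum>k\<in>UNIV. h j k)"
proof -
  have "(\<Sum>I\<in>Pi\<^sub>E {..<P} (\<lambda>_. UNIV). h (I s) (I t)) = (\<Sum>I\<in>Pi\<^sub>E {..<P} (\<lambda>_. UNIV). \<Sum>j\<in>UNIV. \<Sum>k\<in>UNIV. h j k * (if I s = j \<and> I t = k then 1 else 0))"
  proof (intro sum.cong refl)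
    fix I :: "nat \<Rightarrow> 'k"
    have "(\<Sum>k\<in>UNIV. h j k * (if I s = j \<and> I t = k then 1 else 0)) = (if I s = j then h j (I t) else 0)" for j
      by (cases "I s = j") (simp_all add: mult.commute[of "h j _"] if_distrib cong: if_cong)
    then show "h (I s) (I t) = (\<Sum>j\<in>UNIV. \<Sum>k\<in>UNIV. h j k * (if I s = j \<and> I t = k then 1 else 0))"
      by simp
  qed
  also have "\<dots> = (\<Sum>j\<in>UNIV. \<Sum>k\<in>UNIV. h j k * (\<Sum>I\<in>Pi\<^sub>E {..<P} (\<lambda>_. UNIV). if I s = j \<and> I t = k then 1 else 0))"
  proof -
    have "(\<Sum>I\<in>Pi\<^sub>E {..<P} (\<lambda>_. UNIV). \<Sum>j\<in>UNIV. \<Sum>k\<in>UNIV. h j k * (if I s = j \<and> I t = k then 1 else (0::real)))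
       = (\<Sum>j\<in>UNIV. \<Sum>I\<in>Pi\<^sub>E {..<P} (\<lambda>_. UNIV). \<Sum>k\<in>UNIV. h j k * (if I s = j \<and> I t = k then 1 else 0))"
      by (rule sum.swap)
    also have "\<dots> = (\<Sum>j\<in>UNIV. \<Sum>k\<in>UNIV. \<Sum>I\<in>Pi\<^sub>E {..<P} (\<lambda>_. UNIV). h j k * (if I s = j \<and> I t = k then 1 else 0))"
      by (intro sum.cong refl) (rule sum.swap)
    finally show ?thesis by (simp add: sum_distrib_left)
  qed
  also have "\<dots> = real CARD('k) ^ (P - 2) * (\<Sum>j\<in>UNIV. \<Sum>k\<in>UNIV. h j k)"
    unfolding count2[OF assms] by (simp add: sum_distrib_right sum_distrib_left mult.commute)
  finally show ?thesis .
qed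



lemma cu_eq:
  "collective_update P \<delta> I = (\<Sum>s<P. \<delta> (I s) *\<^sub>R axis (I s) (1::real))"
  unfolding collective_update_def
  by (simp add: vec_eq_iff sum_component axis_def if_distrib[of "\<lambda>z. _ * z"] eq_commute cong: if_cong)

lemma lin_form:
  fixes g :: "real^'k"
  shows "(\<Sum>s<P. c s *\<^sub>R axis (J s) (1::real)) \<bullet> g = (\<Sum>s<P. c s * g $ J s)"
  by (simp add: inner_sum_left inner_axis')

lemma quad_form:
  fixes M :: "real^'k^'k"
  shows "(\<Sum>s<P. c s *\<^sub>R axis (J s) (1::real)) \<bullet> (M *v (\<Sum>t<P. c t *\<^sub>R axis (J t) (1::real)))
     = (\<Sum>s<P. \<Sum>t<P. c s * c t * M $ J s $ J t)"
proof -
  have "M *v (\<Sum>t<P. c t *\<^sub>R axis (J t) (1::real)) = (\<Sum>t<P. c t *\<^sub>R (M *v axis (J t) 1))"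
    by (simp add: vec.sum matrix_vector_mult_scaleR)
  then have "(\<Sum>s<P. c s *\<^sub>R axis (J s) (1::real)) \<bullet> (M *v (\<Sum>t<P. c t *\<^sub>R axis (J t) (1::real))) = (\<Sum>t<P. \<Sum>n<P. c t * (c n * M $ J n $ J t))"
    by (simp add: inner_sum_left inner_sum_right inner_axis' matrix_vector_mult_basis column_def
        sum_component sum_distrib_left mult.assoc)
  also have "\<dots> = (\<Sum>s<P. \<Sum>t<P. c s * c t * M $ J s $ J t)" by (subst sum.swap) (simp add: ac_simps)
  finally show ?thesis .
qed

lemma quad_vec:
  fixes M :: "real^'k^'k"
  shows "(\<chi> j. d j) \<bullet> (M *v (\<chi> j. d j)) = (\<Sum>j\<in>UNIV. \<Sum>k\<in>UNIV. d j * d k * M $ j $ k)"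
  by (simp add: inner_vec_def matrix_vector_mult_def sum_distrib_left ac_simps)

lemma self_vec: "(\<chi> j. d j) \<bullet> (\<chi> j. d j) = (\<Sum>j\<in>UNIV. (d j)^2)"
  by (simp add: inner_vec_def power2_eq_square)

lemma Ahat_diag:
  assumes diag: "\<forall>j. (transpose A ** A) $ j $ j = 1"
  shows "(transpose (Ahat A) ** Ahat A) $ j $ j = 1"
proof -
  have "(transpose (Ahat A) ** Ahat A) $ j $ j = (\<Sum>i\<in>UNIV. (Ahat A) $ i $ j * (Ahat A) $ i $ j)"
    by (simp add: matrix_matrix_mult_def transpose_def)
  also have "\<dots> = 1"
  proof (cases j)
    case (Inl a)
    then show ?thesis using diag[rule_format, of a]
      by (simp add: Ahat_def matrix_matrix_mult_def transpose_def)
  next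
    case (Inr a)
    then show ?thesis using diag[rule_format, of a]
      by (simp add: Ahat_def matrix_matrix_mult_def transpose_def)
  qed
  finally show ?thesis .
qed



theorem lemma3p3:
  fixes A :: "real^'d^'n" and y :: "'n \<Rightarrow> real" and lam :: real
    and L :: "real \<Rightarrow> real \<Rightarrow> real" and gradF :: "real^('d + 'd) \<Rightarrow> real^('d + 'd)"
    and \<beta> :: real and P :: nat and x :: "real^('d + 'd)"
  defines "F \<equiv> shotgun_F A y lam L"
    and "\<rho> \<equiv> mat_spectral_radius (transpose (Ahat A) ** Ahat A)"
    and "\<delta> \<equiv> shoot_delta \<beta> (gradF x) x"
  assumes diag: "\<forall>j. (transpose A ** A) $ j $ j = 1"
    and lam: "lam \<ge> 0"
    and L_nonneg: "\<forall>u v. L u v \<ge> 0"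
    and L_convex: "\<forall>v. convex_on UNIV (\<lambda>u. L u v)"
    and F_convex: "convex_on nonneg_orthant F"
    and grad: "\<forall>z\<in>nonneg_orthant. (F has_derivative (\<lambda>h. gradF z \<bullet> h)) (at z within nonneg_orthant)"
    and beta_pos: "\<beta> > 0"
    and smooth: "\<forall>z \<Delta>. z \<in> nonneg_orthant \<longrightarrow> z + \<Delta> \<in> nonneg_orthant \<longrightarrow>
         F (z + \<Delta>) \<le> F z + \<Delta> \<bullet> gradF z + \<beta> / 2 * (\<Delta> \<bullet> ((transpose (Ahat A) ** Ahat A) *v \<Delta>))"
    and P_pos: "P > 0"
    and P_bound: "real P < 2 * real CARD('d) / \<rho> + 1"
    and x_nonneg: "x \<in> nonneg_orthant"
    and feasible: "\<forall>I \<in> Pi\<^sub>E {..<P} (\<lambda>_. UNIV). x + collective_update P \<delta> I \<in> nonneg_orthant"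
  shows "(\<Sum>I \<in> Pi\<^sub>E {..<P} (\<lambda>_. UNIV). F (x + collective_update P \<delta> I) - F x)
            / (2 * real CARD('d)) ^ P
         \<le> real P * ((\<Sum>j\<in>UNIV. \<delta> j * gradF x $ j
              + \<beta> / 2 * (1 + (real P - 1) * \<rho> / (2 * real CARD('d))) * (\<delta> j)^2)
              / (2 * real CARD('d)))"
proof -
  define M where "M = transpose (Ahat A) ** Ahat A"
  define g where "g = gradF x"
  define N where "N = real CARD('d + 'd)"
  define \<Omega> where "\<Omega> = Pi\<^sub>E {..<P} (\<lambda>_. UNIV :: ('d+'d) set)"
  define G where "G = (\<Sum>j\<in>UNIV. \<delta> j * g $ j)"
  define S2 where "S2 = (\<Sum>j\<in>UNIV. (\<delta> j)^2)"
  define T where "T = (\<Sum>j\<in>UNIV. \<Sum>k\<in>UNIV. \<delta> j * \<delta> k * M $ j $ k)"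
  have N2: "N = 2 * real CARD('d)" unfolding N_def by (simp add: card_sum)
  have Npos: "N > 0" unfolding N_def by simp
  have Mjj: "M $ j $ j = 1" for j unfolding M_def by (rule Ahat_diag[OF diag])
  have symM: "transpose M = M" unfolding M_def by (simp add: matrix_transpose_mul)
  have \<rho>M: "\<rho> = mat_spectral_radius M" unfolding \<rho>_def M_def ..
  have TS: "T \<le> \<rho> * S2"
    using rayleigh[OF symM, of "\<chi> j. \<delta> j"] unfolding T_def S2_def \<rho>M quad_vec self_vec .
  have P1: "P \<ge> 1" using P_pos by simp
  have step1: "(\<Sum>I\<in>\<Omega>. F (x + collective_update P \<delta> I) - F x)
      \<le> (\<Sum>I\<in>\<Omega>. collective_update P \<delta> I \<bullet> g + \<beta> / 2 * (collective_update P \<delta> I \<bullet> (M *v collective_update P \<delta> I)))"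
  proof (rule sum_mono)
    fix I assume "I \<in> \<Omega>"
    then have "x + collective_update P \<delta> I \<in> nonneg_orthant" using feasible unfolding \<Omega>_def by blast
    then show "F (x + collective_update P \<delta> I) - F x
      \<le> collective_update P \<delta> I \<bullet> g + \<beta> / 2 * (collective_update P \<delta> I \<bullet> (M *v collective_update P \<delta> I))"
      using smooth x_nonneg unfolding g_def M_def by fastforce
  qed
  have lin: "(\<Sum>I\<in>\<Omega>. collective_update P \<delta> I \<bullet> g) = real P * N ^ (P - 1) * G"
  proof -
    have "(\<Sum>I\<in>\<Omega>. collective_update P \<delta> I \<bullet> g) = (\<Sum>I\<in>\<Omega>. \<Sum>s<P. \<delta> (I s) * g $ I s)"
      by (simp add: cu_eq lin_form)
    also have "\<dots> = (\<Sum>s<P. \<Sum>I\<in>\<Omega>. \<delta> (I s) * g $ I s)" by (rule sum.swap)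
    also have "\<dots> = (\<Sum>s<P. N ^ (P - 1) * G)"
    proof (intro sum.cong refl)
      fix s assume "s \<in> {..<P}"
      then show "(\<Sum>I\<in>\<Omega>. \<delta> (I s) * g $ I s) = N ^ (P - 1) * G"
        using sum1[of s P "\<lambda>j. \<delta> j * g $ j"] unfolding \<Omega>_def N_def G_def by simp
    qed
    finally show ?thesis by simp
  qed
  have quad: "(\<Sum>I\<in>\<Omega>. collective_update P \<delta> I \<bullet> (M *v collective_update P \<delta> I))
      = real P * (N ^ (P - 1) * S2 + (real P - 1) * N ^ (P - 2) * T)"
  proof -
    have "(\<Sum>I\<in>\<Omega>. collective_update P \<delta> I \<bullet> (M *v collective_update P \<delta> I))
        = (\<Sum>I\<in>\<Omega>. \<Sum>s<P. \<Sum>t<P. \<delta> (I s) * \<delta> (I t) * M $ I s $ I t)"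
      by (simp add: cu_eq quad_form)
    also have "\<dots> = (\<Sum>s<P. \<Sum>I\<in>\<Omega>. \<Sum>t<P. \<delta> (I s) * \<delta> (I t) * M $ I s $ I t)" by (rule sum.swap)
    also have "\<dots> = (\<Sum>s<P. N ^ (P - 1) * S2 + (real P - 1) * N ^ (P - 2) * T)"
    proof (intro sum.cong refl)
      fix s assume s: "s \<in> {..<P}"
      have "(\<Sum>I\<in>\<Omega>. \<Sum>t<P. \<delta> (I s) * \<delta> (I t) * M $ I s $ I t)
          = (\<Sum>t<P. \<Sum>I\<in>\<Omega>. \<delta> (I s) * \<delta> (I t) * M $ I s $ I t)" by (rule sum.swap)
      also have "\<dots> = (\<Sum>I\<in>\<Omega>. \<delta> (I s) * \<delta> (I s) * M $ I s $ I s)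
          + (\<Sum>t\<in>{..<P} - {s}. \<Sum>I\<in>\<Omega>. \<delta> (I s) * \<delta> (I t) * M $ I s $ I t)"
        using s by (simp add: sum.remove)
      also have "(\<Sum>I\<in>\<Omega>. \<delta> (I s) * \<delta> (I s) * M $ I s $ I s) = N ^ (P - 1) * S2"
        using s sum1[of s P "\<lambda>j. \<delta> j * \<delta> j * M $ j $ j"]
        by (simp add: \<Omega>_def N_def S2_def Mjj power2_eq_square)
      also have "(\<Sum>t\<in>{..<P} - {s}. \<Sum>I\<in>\<Omega>. \<delta> (I s) * \<delta> (I t) * M $ I s $ I t)
          = (\<Sum>t\<in>{..<P} - {s}. N ^ (P - 2) * T)"
      proof (intro sum.cong refl)
        fix t assume t: "t \<in> {..<P} - {s}"
        show "(\<Sum>I\<in>\<Omega>. \<delta> (I s) * \<delta> (I t) * M $ I s $ I t) = N ^ (P - 2) * T"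
          using s t sum2[of s P t "\<lambda>j k. \<delta> j * \<delta> k * M $ j $ k"]
          by (simp add: \<Omega>_def N_def T_def)
      qed
      also have "\<dots> = (real P - 1) * N ^ (P - 2) * T"
        using s P1 by (simp add: of_nat_diff)
      finally show "(\<Sum>I\<in>\<Omega>. \<Sum>t<P. \<delta> (I s) * \<delta> (I t) * M $ I s $ I t) = N ^ (P - 1) * S2 + (real P - 1) * N ^ (P - 2) * T" .
    qed
    finally show ?thesis by simp
  qed
  have e1: "N ^ (P - 1) / N ^ P = 1 / N"
  proof -
    have "N ^ P = N ^ (P - 1) * N" using P1 by (metis Suc_diff_1 P_pos power_Suc2)
    then show ?thesis using Npos by simp
  qed
  have e2: "(real P - 1) * N ^ (P - 2) / N ^ P = (real P - 1) / N^2"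
  proof (cases "P = 1")
    case True then show ?thesis by simp
  next
    case False
    then have "P \<ge> 2" using P1 by simp
    then have "N ^ P = N ^ (P - 2) * N^2" by (metis le_add_diff_inverse2 power_add)
    then show ?thesis using Npos by simp
  qed
  have sumR: "(\<Sum>j\<in>UNIV. \<delta> j * gradF x $ j + \<beta> / 2 * (1 + (real P - 1) * \<rho> / (2 * real CARD('d))) * (\<delta> j)^2)
     = G + \<beta> / 2 * (1 + (real P - 1) * \<rho> / N) * S2"
    unfolding G_def S2_def g_def N2 by (simp add: sum.distrib sum_distrib_left)
  have "(\<Sum>I \<in> \<Omega>. F (x + collective_update P \<delta> I) - F x) / N ^ P
      \<le> (real P * N ^ (P - 1) * G + \<beta> / 2 * (real P * (N ^ (P - 1) * S2 + (real P - 1) * N ^ (P - 2) * T))) / N ^ P"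
    using step1 unfolding sum.distrib lin sum_distrib_left[symmetric] quad
    using Npos by (intro divide_right_mono) auto
  also have "\<dots> = real P * G * (N ^ (P - 1) / N ^ P) + \<beta> / 2 * real P * S2 * (N ^ (P - 1) / N ^ P)
      + \<beta> / 2 * real P * T * ((real P - 1) * N ^ (P - 2) / N ^ P)"
    using Npos by (simp add: field_simps)
  also have "\<dots> = real P * G / N + \<beta> / 2 * real P * S2 / N + \<beta> / 2 * real P * T * (real P - 1) / N^2"
    unfolding e1 e2 by simp
  also have "\<dots> \<le> real P * G / N + \<beta> / 2 * real P * S2 / N + \<beta> / 2 * real P * (\<rho> * S2) * (real P - 1) / N^2"
  proof -
    have "\<beta> / 2 * real P * T * (real P - 1) \<le> \<beta> / 2 * real P * (\<rho> * S2) * (real P - 1)"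
      using TS beta_pos P1 by (intro mult_right_mono mult_left_mono) auto
    then show ?thesis using Npos by (simp add: divide_right_mono)
  qed
  also have "\<dots> = real P * ((G + \<beta> / 2 * (1 + (real P - 1) * \<rho> / N) * S2) / N)"
    using Npos by (simp add: field_simps power2_eq_square)
  finally show ?thesis unfolding sumR \<Omega>_def N2 .
qed

end
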